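(* $\mathrm{GL}_4(\mathbb{F}_3)$ does not contain a subgroup isomorphic to $A_5\times V_4$.
   Context: $V_4\cong C_2\times C_2$ is the Klein four-group. *)

theory Defs
  imports "HOL-Analysis.Analysis" "HOL-Algebra.Algebra"
begin

text \<open>The field F_3 is represented by the numeral type 3 (integers mod 3, HOL-Library.Numeral_Type);
  4 x 4 matrices over it are elements of type 3^4^4. GL_4(F_3) is the group of invertible matrices
  under matrix multiplication.\<close>

definition GL4_F3 :: "(3^4^4) monoid" where
  "GL4_F3 = \<lparr>carrier = {A :: 3^4^4. invertible A}, mult = (**), one = mat 1\<rparr>"

definition V4 :: "(int \<times> int) monoid" where
  "V4 = DirProd (integer_mod_group 2) (integer_mod_group 2)"

definition A5_times_V4 :: "((nat \<Rightarrow> nat) \<times> (int \<times> int)) monoid" where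
  "A5_times_V4 = DirProd (alt_group 5) V4"

end

theory Submission
  imports Defs "HOL-Computational_Algebra.Primes"
begin

lemma five_distinct: "f a = b \<Longrightarrow> f b = c \<Longrightarrow> f c = d \<Longrightarrow> f d = e \<Longrightarrow> f e = a \<Longrightarrow> a\<noteq>b \<Longrightarrow> b\<noteq>c \<Longrightarrow> c\<noteq>d \<Longrightarrow> d\<noteq>e \<Longrightarrow> e\<noteq>a
 \<Longrightarrow> a\<noteq>c \<and> a\<noteq>d \<and> b\<noteq>d \<and> b\<noteq>e \<and> c\<noteq>e"
  by metis

lemma orbit5:
  assumes "finite S" "\<forall>x\<in>S. f x \<in> S" "\<forall>x\<in>S. f (f (f (f (f x)))) = x" "\<forall>x\<in>S. f x \<noteq> x"
  shows "5 dvd card S"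
  using assms
proof (induction S rule: finite_psubset_induct)
  case (psubset S)
  show ?case
  proof (cases "S = {}")
    case True then show ?thesis by simp
  next
    case False
    then obtain x where x: "x \<in> S" by blast
    define Orb where "Orb = {x, f x, f (f x), f (f (f x)), f (f (f (f x)))}"
    have OS: "Orb \<subseteq> S" using x psubset.prems unfolding Orb_def by auto
    have d1: "x \<noteq> f x" "f x \<noteq> f (f x)" "f (f x) \<noteq> f (f (f x))" "f (f (f x)) \<noteq> f (f (f (f x)))"
      "f (f (f (f x))) \<noteq> x"
    proof -
      have m: "f x \<in> S" "f (f x) \<in> S" "f (f (f x)) \<in> S" "f (f (f (f x))) \<in> S"
        using x psubset.prems(1) by auto
      have nf: "\<And>y. y \<in> S \<Longrightarrow> y \<noteq> f y" using psubset.prems(3) by metis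
      show "x \<noteq> f x" "f x \<noteq> f (f x)" "f (f x) \<noteq> f (f (f x))" "f (f (f x)) \<noteq> f (f (f (f x)))"
        using nf m x by auto
      show "f (f (f (f x))) \<noteq> x" using nf[OF m(4)] psubset.prems(2) x by auto
    qed
    have d2: "x \<noteq> f (f x) \<and> x \<noteq> f (f (f x)) \<and> f x \<noteq> f (f (f x)) \<and> f x \<noteq> f (f (f (f x))) \<and> f (f x) \<noteq> f (f (f (f x)))"
      by (rule five_distinct[of f x "f x" "f (f x)" "f (f (f x))" "f (f (f (f x)))"])
        (use d1 x psubset.prems in auto)
    have cO: "card Orb = 5" unfolding Orb_def using d1 d2 by auto
    have sub: "S - Orb \<subset> S" using OS x unfolding Orb_def by auto
    have inv: "\<forall>y\<in>S - Orb. f y \<in> S - Orb"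
    proof
      fix y assume y: "y \<in> S - Orb"
      have "f y \<in> S" using y psubset.prems by auto
      moreover have "f y \<notin> Orb"
      proof
        assume "f y \<in> Orb"
        then have "f (f (f (f (f y)))) \<in> Orb" unfolding Orb_def using x psubset.prems by auto
        then show False using y psubset.prems by auto
      qed
      ultimately show "f y \<in> S - Orb" by auto
    qed
    have "5 dvd card (S - Orb)"
      using psubset.IH[OF sub] psubset.prems inv by auto
    moreover have "card (S - Orb) = card S - 5" using OS cO psubset.hyps(1)
      by (metis card_Diff_subset finite_subset)
    moreover have "card S \<ge> 5" using OS cO psubset.hyps(1) card_mono by metis
    ultimately show ?thesis by (metis dvd_diffD dvd_refl)
  qed
qed

lemma div81: assumes "(d::nat) dvd 81" "d mod 5 = 1" shows "d = 1 \<or> d = 81"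
proof -
  have "\<exists>i\<le>4. d = 3^i" using divides_primepow_nat[of 3 d 4] assms by simp
  then obtain i where "i \<le> 4" "d = 3^i" by auto
  then have "i = 0 \<or> i = 1 \<or> i = 2 \<or> i = 3 \<or> i = 4" by linarith
  then show ?thesis using assms(2) \<open>d = 3^i\<close> by auto
qed

definition addG :: "(3^4) monoid" where "addG = \<lparr>carrier = UNIV, mult = (+), one = 0\<rparr>"

lemma addG_group: "group addG"
  apply (rule groupI) apply (auto simp: addG_def add.assoc)
  by (metis add.left_inverse)

lemma card_UNIV_34: "CARD(3^4) = 81" by simp

lemma sub_dvd:
  fixes W :: "(3^4) set"
  assumes "0 \<in> W" "\<forall>a\<in>W. \<forall>b\<in>W. a + b \<in> W" "\<forall>a\<in>W. - a \<in> W"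
  shows "card W dvd 81"
proof -
  interpret group addG by (rule addG_group)
  have invG: "inv\<^bsub>addG\<^esub> a = - a" for a
    by (rule inv_equality) (auto simp: addG_def)
  have "subgroup W addG"
    by (rule subgroupI) (use assms invG in \<open>auto simp: addG_def\<close>)
  then have "card (rcosets\<^bsub>addG\<^esub> W) * card W = order addG" by (rule lagrange)
  moreover have "order addG = 81" by (simp add: order_def addG_def)
  ultimately show ?thesis by (metis dvd_triv_right)
qed

lemma mv_neg: fixes A :: "3^4^4" shows "A *v (- x) = - (A *v x)"
  using matrix_vector_mult_diff_distrib[of A 0 x] by simp

lemma pow5_vec: fixes g :: "3^4^4" assumes "g**g**g**g**g = mat 1"
  shows "g *v (g *v (g *v (g *v (g *v v)))) = v"
proof -
  have "(g**g**g**g**g) *v v = v" using assms by simp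
  then show ?thesis by (simp add: matrix_vector_mul_assoc matrix_mul_assoc)
qed

lemma eq_UNIV_of_card: fixes W :: "(3^4) set" assumes "card W = 81" shows "W = UNIV"
  by (rule card_subset_eq) (use assms in auto)

lemma nofix:
  fixes g :: "3^4^4"
  assumes g5: "g**g**g**g**g = mat 1" and g1: "g \<noteq> mat 1" and v: "g *v v = v"
  shows "v = 0"
proof -
  define W where "W = {v. g *v v = v}"
  have cd: "card W dvd 81"
    by (rule sub_dvd) (auto simp: W_def matrix_vector_right_distrib mv_neg)
  have "5 dvd card (UNIV - W)"
  proof (rule orbit5[where f = "\<lambda>v. g *v v"])
    show "\<forall>x\<in>UNIV - W. g *v x \<in> UNIV - W"
    proof
      fix x assume x: "x \<in> UNIV - W"
      show "g *v x \<in> UNIV - W"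
      proof (rule ccontr)
        assume "g *v x \<notin> UNIV - W"
        then have h: "g *v (g *v x) = g *v x" by (simp add: W_def)
        have "g *v (g *v (g *v (g *v (g *v x)))) = g *v x" by (simp add: h)
        then have "x = g *v x" using pow5_vec[OF g5, of x] by simp
        then show False using x by (simp add: W_def)
      qed
    qed
  qed (auto simp: W_def pow5_vec[OF g5])
  moreover have "card (UNIV - W) = 81 - card W" by (simp add: card_Diff_subset)
  moreover have "card W \<le> 81" using cd by (simp add: dvd_imp_le)
  ultimately have "card W mod 5 = 1" by presburger
  with cd have "card W = 1 \<or> card W = 81" by (rule div81)
  moreover have "card W \<noteq> 81"
  proof
    assume "card W = 81"
    then have "W = UNIV" by (rule eq_UNIV_of_card)
    then have "g = mat 1" by (auto simp: matrix_eq W_def)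
    with g1 show False by simp
  qed
  ultimately have "card W = 1" by simp
  moreover have "0 \<in> W" "v \<in> W" using v by (auto simp: W_def)
  ultimately show ?thesis by (metis card_1_singletonE singletonD)
qed

lemma invol_neg:
  fixes g t :: "3^4^4"
  assumes g5: "g**g**g**g**g = mat 1" and g1: "g \<noteq> mat 1" and comm: "t ** g = g ** t"
    and t2: "t ** t = mat 1" and t1: "t \<noteq> mat 1"
  shows "t *v v = - v"
proof -
  define E where "E = {v. t *v v = v}"
  have cd: "card E dvd 81"
    by (rule sub_dvd) (auto simp: E_def matrix_vector_right_distrib mv_neg)
  have ginv: "g *v x \<in> E" if "x \<in> E" for x
  proof -
    have "t *v (g *v x) = (t ** g) *v x" by (simp add: matrix_vector_mul_assoc)
    also have "\<dots> = g *v (t *v x)" by (simp add: comm matrix_vector_mul_assoc)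
    finally show ?thesis using that by (simp add: E_def)
  qed
  have "5 dvd card (E - {0})"
  proof (rule orbit5[where f = "\<lambda>v. g *v v"])
    show "\<forall>x\<in>E - {0}. g *v x \<in> E - {0}"
    proof
      fix x assume x: "x \<in> E - {0}"
      have "g *v x \<noteq> 0"
      proof
        assume h: "g *v x = 0"
        have "x = g *v (g *v (g *v (g *v (g *v x))))" using pow5_vec[OF g5, of x] by simp
        also have "\<dots> = 0" by (simp add: h)
        finally show False using x by simp
      qed
      then show "g *v x \<in> E - {0}" using ginv x by auto
    qed
  qed (auto simp: pow5_vec[OF g5] dest: nofix[OF g5 g1])
  moreover have "0 \<in> E" by (simp add: E_def)
  moreover have "card (E - {0}) = card E - 1" using \<open>0 \<in> E\<close> by simp
  moreover have "card E \<ge> 1" using \<open>0 \<in> E\<close> by (metis One_nat_def Suc_leI card_gt_0_iff empty_iff finite)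
  ultimately have "card E mod 5 = 1" by presburger
  with cd have "card E = 1 \<or> card E = 81" by (rule div81)
  moreover have "card E \<noteq> 81"
  proof
    assume "card E = 81"
    then have "E = UNIV" by (rule eq_UNIV_of_card)
    then have "t = mat 1" by (auto simp: matrix_eq E_def)
    with t1 show False by simp
  qed
  ultimately have "card E = 1" by simp
  then have E0: "E = {0}" using \<open>0 \<in> E\<close> by (metis card_1_singletonE singletonD)
  have "t *v (v + t *v v) = v + t *v v"
    by (simp add: matrix_vector_right_distrib matrix_vector_mul_assoc t2 add.commute)
  then have "v + t *v v \<in> E" by (simp add: E_def)
  then have "v + t *v v = 0" using E0 by simp
  then show ?thesis by (metis add_eq_0_iff)
qed


definition sig5 :: "nat \<Rightarrow> nat" where
  "sig5 = Transposition.transpose 1 2 \<circ> Transposition.transpose 2 3 \<circ> Transposition.transpose 3 4 \<circ> Transposition.transpose 4 5"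

lemma sig5_carrier: "sig5 \<in> carrier (alt_group 5)"
proof -
  have "sig5 permutes {1..5}" unfolding sig5_def
    by (intro permutes_compose permutes_swap_id) auto
  moreover have "evenperm sig5" unfolding sig5_def
    by (simp add: evenperm_comp permutation_compose permutation_swap_id evenperm_swap)
  ultimately show ?thesis by (simp add: alt_group_def)
qed

lemma sig5_eq: "sig5 n = (if n = 1 then 2 else if n = 2 then 3 else if n = 3 then 4 else if n = 4 then 5 else if n = 5 then 1 else n)"
  unfolding sig5_def by (simp add: Transposition.transpose_def)

lemma sig5_pow: "sig5 \<circ> sig5 \<circ> sig5 \<circ> sig5 \<circ> sig5 = id"
proof
  fix n :: nat
  consider "n = 1" | "n = 2" | "n = 3" | "n = 4" | "n = 5" | "n \<noteq> 1 \<and> n \<noteq> 2 \<and> n \<noteq> 3 \<and> n \<noteq> 4 \<and> n \<noteq> 5" by blast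
  then show "(sig5 \<circ> sig5 \<circ> sig5 \<circ> sig5 \<circ> sig5) n = id n"
    by cases (simp_all add: sig5_eq)
qed

lemma sig5_ne: "sig5 \<noteq> id"
proof
  assume "sig5 = id"
  then have "sig5 1 = 1" by simp
  then show False by (simp add: sig5_eq)
qed

lemma A_group: "group A5_times_V4"
  unfolding A5_times_V4_def V4_def
  by (intro DirProd_group alt_group_is_group group_integer_mod_group)

lemma A_carrier: "carrier A5_times_V4 = carrier (alt_group 5) \<times> ({0..<2} \<times> {0..<2})"
  by (simp add: A5_times_V4_def V4_def integer_mod_group_def)

lemma A_mult: "(a, b, c) \<otimes>\<^bsub>A5_times_V4\<^esub> (a', b', c') = (a \<circ> a', (b + b') mod 2, (c + c') mod 2)"
  by (simp add: A5_times_V4_def V4_def integer_mod_group_def alt_group_mult)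

lemma A_one: "\<one>\<^bsub>A5_times_V4\<^esub> = (id, 0, 0)"
  by (simp add: A5_times_V4_def V4_def integer_mod_group_def alt_group_one)

lemma id_alt: "id \<in> carrier (alt_group 5)"
  by (metis alt_group_is_group alt_group_one group.is_monoid monoid.one_closed)


theorem lemma3p15:
  shows "\<not> (\<exists>H. subgroup H GL4_F3 \<and> GL4_F3\<lparr>carrier := H\<rparr> \<cong> A5_times_V4)"
proof
  assume "\<exists>H. subgroup H GL4_F3 \<and> GL4_F3\<lparr>carrier := H\<rparr> \<cong> A5_times_V4"
  then obtain H where sg: "subgroup H GL4_F3" and iso: "GL4_F3\<lparr>carrier := H\<rparr> \<cong> A5_times_V4" by blast
  from iso obtain phi where phi: "phi \<in> iso (GL4_F3\<lparr>carrier := H\<rparr>) A5_times_V4"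
    unfolding is_iso_def by blast
  have hom: "phi (u ** w) = phi u \<otimes>\<^bsub>A5_times_V4\<^esub> phi w" if "u \<in> H" "w \<in> H" for u w
    using phi that unfolding iso_def hom_def by (auto simp: GL4_F3_def)
  have bij: "bij_betw phi H (carrier A5_times_V4)" using phi unfolding iso_def by simp
  then have inj: "inj_on phi H" and surj: "phi ` H = carrier A5_times_V4"
    by (auto simp: bij_betw_def)
  have mc: "u ** w \<in> H" if "u \<in> H" "w \<in> H" for u w
    using subgroup.m_closed[OF sg that] by (simp add: GL4_F3_def)
  have oneH: "mat 1 \<in> H" using subgroup.one_closed[OF sg] by (simp add: GL4_F3_def)

  have phi1: "phi (mat 1) = \<one>\<^bsub>A5_times_V4\<^esub>"
  proof -
    have c: "phi (mat 1) \<in> carrier A5_times_V4" using surj oneH by blast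
    have "phi (mat 1) = phi (mat 1) \<otimes>\<^bsub>A5_times_V4\<^esub> phi (mat 1)"
      using hom[OF oneH oneH] by simp
    then show ?thesis using group.l_cancel_one'[OF A_group c c] by simp
  qed
  have eqI: "u = w" if "u \<in> H" "w \<in> H" "phi u = phi w" for u w
    using inj that by (auto simp: inj_on_def)
  define Xg where "Xg = (sig5, (0::int, 0::int))"
  define Y1 where "Y1 = (id :: nat \<Rightarrow> nat, (1::int, 0::int))"
  define Y2 where "Y2 = (id :: nat \<Rightarrow> nat, (0::int, 1::int))"
  have XC: "Xg \<in> carrier A5_times_V4" and Y1C: "Y1 \<in> carrier A5_times_V4" and Y2C: "Y2 \<in> carrier A5_times_V4"
    by (auto simp: Xg_def Y1_def Y2_def A_carrier sig5_carrier id_alt)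
  obtain g where g: "g \<in> H" "phi g = Xg" using XC surj by (metis imageE)
  obtain s1 where s1: "s1 \<in> H" "phi s1 = Y1" using Y1C surj by (metis imageE)
  obtain s2 where s2: "s2 \<in> H" "phi s2 = Y2" using Y2C surj by (metis imageE)
  have g5: "g**g**g**g**g = mat 1"
  proof (rule eqI)
    show "g**g**g**g**g \<in> H" using g mc by simp
    show "phi (g**g**g**g**g) = phi (mat 1)"
      using g mc by (simp add: hom phi1 Xg_def A_mult A_one sig5_pow)
  qed (rule oneH)
  have g1: "g \<noteq> mat 1"
  proof
    assume "g = mat 1"
    then have "Xg = \<one>\<^bsub>A5_times_V4\<^esub>" using g phi1 by simp
    then show False using sig5_ne by (simp add: Xg_def A_one)
  qed
  have t1: "s1 ** s1 = mat 1" "s1 ** g = g ** s1" "s1 \<noteq> mat 1"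
  proof -
    show "s1 ** s1 = mat 1"
      by (rule eqI) (use s1 mc oneH in \<open>simp_all add: hom phi1 Y1_def A_mult A_one\<close>)
    show "s1 ** g = g ** s1"
      by (rule eqI) (use s1 g mc in \<open>simp_all add: hom Y1_def Xg_def A_mult\<close>)
    show "s1 \<noteq> mat 1"
    proof
      assume "s1 = mat 1"
      then have "Y1 = \<one>\<^bsub>A5_times_V4\<^esub>" using s1 phi1 by simp
      then show False by (simp add: Y1_def A_one)
    qed
  qed
  have t2: "s2 ** s2 = mat 1" "s2 ** g = g ** s2" "s2 \<noteq> mat 1"
  proof -
    show "s2 ** s2 = mat 1"
      by (rule eqI) (use s2 mc oneH in \<open>simp_all add: hom phi1 Y2_def A_mult A_one\<close>)
    show "s2 ** g = g ** s2"
      by (rule eqI) (use s2 g mc in \<open>simp_all add: hom Y2_def Xg_def A_mult\<close>)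
    show "s2 \<noteq> mat 1"
    proof
      assume "s2 = mat 1"
      then have "Y2 = \<one>\<^bsub>A5_times_V4\<^esub>" using s2 phi1 by simp
      then show False by (simp add: Y2_def A_one)
    qed
  qed
  have "s1 = s2"
    unfolding matrix_eq
    using invol_neg[OF g5 g1 t1(2,1,3)] invol_neg[OF g5 g1 t2(2,1,3)] by simp
  then have "Y1 = Y2" using s1 s2 by simp
  then show False by (simp add: Y1_def Y2_def)
qed

end
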